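(* Let $\Gamma$ be a temporal language preserved by a constant operation, by $-$, and by $\mathrm{cyc}$. If $\Gamma$ does not pp-define $S=\{(x,y,z)\in\mathbb{Q}^3\mid (x=y=z)\vee(x\neq y\wedge x\neq z\wedge z\neq y)\}$, then $\Gamma$ is preserved by $\mathrm{su}_1$, $\mathrm{peak}$, $\mathrm{ci}$, $\mathrm{ic}$, or by all permutations of $\mathbb{Q}$.
   Context: A temporal language is a relational structure with domain $\mathbb{Q}$ and finite signature whose relations are first-order definable in $(\mathbb{Q};<)$. $\Gamma$ pp-defines $R$ if $R$ is definable by a primitive positive formula over the signature of $\Gamma$. An operation preserves $\Gamma$ if, applied componentwise, it maps tuples of each relation of $\Gamma$ to a tuple of that relation. $-(x)=-x$. $\mathrm{su}_1(x)=0$ for $x<0$, $1$ for $x\ge0$. $\mathrm{peak}(x)=-1$ for $x\ne0$, $1$ for $x=0$. $\mathrm{ic}(x)=x$ for $x<0$, $0$ for $x\ge0$; $\mathrm{ci}(x)=0$ for $x<0$, $x$ for $x\ge0$. $\mathrm{cyc}(x)=e(x)$ for $x<\pi$ and $e^{-1}(x)$ for $x>\pi$, where $e$ is an order-preserving bijection between $(-\infty,\pi)\cap\mathbb{Q}$ and $(\pi,\infty)\cap\mathbb{Q}$. *)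

theory Defs
  imports Complex_Main
begin

datatype lt_fo = FLt nat nat | FEq nat nat | FNeg lt_fo | FConj lt_fo lt_fo | FExists nat lt_fo

fun lt_sat :: "lt_fo \<Rightarrow> (nat \<Rightarrow> rat) \<Rightarrow> bool" where
  "lt_sat (FLt i j) s = (s i < s j)"
| "lt_sat (FEq i j) s = (s i = s j)"
| "lt_sat (FNeg \<phi>) s = (\<not> lt_sat \<phi> s)"
| "lt_sat (FConj \<phi> \<psi>) s = (lt_sat \<phi> s \<and> lt_sat \<psi> s)"
| "lt_sat (FExists i \<phi>) s = (\<exists>a. lt_sat \<phi> (s(i := a)))"

definition fo_definable_lt :: "nat \<Rightarrow> rat list set \<Rightarrow> bool" where
  "fo_definable_lt n R \<longleftrightarrow> (\<exists>\<phi>. \<forall>s. lt_sat \<phi> s \<longleftrightarrow> map s [0..<n] \<in> R)"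

text \<open>A tstructure with domain Q and finite signature: a finite list of relations,
  each given with its arity.\<close>
type_synonym tstructure = "(nat \<times> rat list set) list"

definition temporal_language :: "tstructure \<Rightarrow> bool" where
  "temporal_language \<Gamma> \<longleftrightarrow>
     (\<forall>(n, R) \<in> set \<Gamma>. R \<subseteq> {t. length t = n} \<and> fo_definable_lt n R)"

datatype pp_fo = PTrue | PAtom nat "nat list" | PEq nat nat | PConj pp_fo pp_fo | PExists nat pp_fo

fun pp_sat :: "tstructure \<Rightarrow> pp_fo \<Rightarrow> (nat \<Rightarrow> rat) \<Rightarrow> bool" where
  "pp_sat \<Gamma> PTrue s = True"
| "pp_sat \<Gamma> (PAtom k vs) s =
     (k < length \<Gamma> \<and> length vs = fst (\<Gamma> ! k) \<and> map s vs \<in> snd (\<Gamma> ! k))"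
| "pp_sat \<Gamma> (PEq i j) s = (s i = s j)"
| "pp_sat \<Gamma> (PConj \<phi> \<psi>) s = (pp_sat \<Gamma> \<phi> s \<and> pp_sat \<Gamma> \<psi> s)"
| "pp_sat \<Gamma> (PExists i \<phi>) s = (\<exists>a. pp_sat \<Gamma> \<phi> (s(i := a)))"

definition pp_defines :: "tstructure \<Rightarrow> nat \<Rightarrow> rat list set \<Rightarrow> bool" where
  "pp_defines \<Gamma> n R \<longleftrightarrow> (\<exists>\<phi>. \<forall>s. pp_sat \<Gamma> \<phi> s \<longleftrightarrow> map s [0..<n] \<in> R)"

definition preserves :: "(rat \<Rightarrow> rat) \<Rightarrow> tstructure \<Rightarrow> bool" where
  "preserves f \<Gamma> \<longleftrightarrow> (\<forall>(n, R) \<in> set \<Gamma>. \<forall>t \<in> R. map f t \<in> R)"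

definition S_rel :: "rat list set" where
  "S_rel = {[x, y, z] | x y z. (x = y \<and> y = z) \<or> (x \<noteq> y \<and> x \<noteq> z \<and> z \<noteq> y)}"

definition su1 :: "rat \<Rightarrow> rat" where
  "su1 x = (if x < 0 then 0 else 1)"

definition peak :: "rat \<Rightarrow> rat" where
  "peak x = (if x \<noteq> 0 then -1 else 1)"

definition ic :: "rat \<Rightarrow> rat" where
  "ic x = (if x < 0 then x else 0)"

definition ci :: "rat \<Rightarrow> rat" where
  "ci x = (if x < 0 then 0 else x)"

definition below_pi :: "rat set" where
  "below_pi = {x. real_of_rat x < pi}"

definition above_pi :: "rat set" where
  "above_pi = {x. pi < real_of_rat x}"

definition cyc_witness :: "(rat \<Rightarrow> rat) \<Rightarrow> bool" where
  "cyc_witness e \<longleftrightarrow> strict_mono_on below_pi e \<and> bij_betw e below_pi above_pi"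

definition cyc :: "(rat \<Rightarrow> rat) \<Rightarrow> rat \<Rightarrow> rat" where
  "cyc e x = (if real_of_rat x < pi then e x else the_inv_into below_pi e x)"

end

theory Submission
  imports Defs
begin


lemma fix_below_map:
  fixes b p q :: rat
  assumes bp: "b < p" and bq: "b < q"
  shows "\<exists>h. strict_mono h \<and> surj h \<and> (\<forall>z\<le>b. h z = z) \<and> h p = q"
proof -
  define c where "c = (q - b) / (p - b)"
  have c0: "c > 0" using bp bq by (simp add: c_def)
  have cp: "b + (p - b) * c = q" using bp by (simp add: c_def)
  define h where "h z = (if z \<le> b then z else if z \<le> p then b + (z - b) * c else q + (z - p))" for z
  have sm: "strict_mono h"
  proof (rule strict_monoI)
    fix x y :: rat assume xy: "x < y"
    have m: "(x - b) * c < (y - b) * c" using xy c0 by simp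
    have m2: "(x - b) * c \<le> (p - b) * c" if "x \<le> p" using that c0 by simp
    have m3: "0 < (y - b) * c" if "b < y" using that c0 by simp
    have qb: "0 < (p - b) * c" using bp c0 by simp
    show "h x < h y"
    proof (cases "y \<le> b")
      case True then show ?thesis using xy by (simp add: h_def)
    next
      case yb: False
      show ?thesis
      proof (cases "y \<le> p")
        case True
        then show ?thesis using xy m m3 yb by (auto simp: h_def)
      next
        case yp: False
        have hy: "h y = q + (y - p)" using yb yp by (simp add: h_def)
        show ?thesis
        proof (cases "x \<le> b")
          case True then show ?thesis using hy cp qb yp bp by (simp add: h_def)
        next
          case False
          show ?thesis
          proof (cases "x \<le> p")
            case True then show ?thesis using hy cp m2 False yp by (simp add: h_def)
          next
            case False then show ?thesis using hy xy \<open>\<not> x \<le> b\<close> by (simp add: h_def)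
          qed
        qed
      qed
    qed
  qed
  have su: "surj h"
  proof -
    have "w \<in> range h" for w
    proof (cases "w \<le> b")
      case True then show ?thesis by (metis h_def rangeI)
    next
      case False
      show ?thesis
      proof (cases "w \<le> q")
        case True
        define z where "z = b + (w - b) / c"
        have "(w - b) / c \<le> (q - b) / c" using True c0 by (simp add: divide_right_mono)
        also have "(q - b) / c = p - b" using bp bq by (simp add: c_def)
        finally have zp: "z \<le> p" by (simp add: z_def)
        have "0 < (w - b) / c" using False c0 by (simp add: divide_pos_pos)
        then have zb: "\<not> z \<le> b" by (simp add: z_def)
        have "h z = w" using zp zb c0 by (simp add: h_def z_def)
        then show ?thesis by (metis rangeI)
      next
        case False
        have "h (p + (w - q)) = w" using False bp by (simp add: h_def)
        then show ?thesis by (metis rangeI)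
      qed
    qed
    then show ?thesis by auto
  qed
  have "h p = q" using bp cp by (simp add: h_def)
  then show ?thesis using sm su by (auto simp: h_def)
qed

lemma ext_sorted:
  fixes xs ys :: "rat list"
  shows "sorted_wrt (<) xs \<Longrightarrow> sorted_wrt (<) ys \<Longrightarrow> length xs = length ys \<Longrightarrow>
    \<exists>f. strict_mono f \<and> surj f \<and> map f xs = ys"
proof (induction xs arbitrary: ys rule: rev_induct)
  case Nil
  then have "strict_mono (id::rat\<Rightarrow>rat) \<and> surj (id::rat\<Rightarrow>rat) \<and> map id [] = ys" by (auto simp: strict_mono_def)
  then show ?case by blast
next
  case (snoc x xs)
  obtain ys' y where ys: "ys = ys' @ [y]"
    using snoc.prems(3) by (cases ys rule: rev_cases) auto
  have "sorted_wrt (<) xs" "sorted_wrt (<) ys'" "length xs = length ys'"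
    using snoc.prems ys by (auto simp: sorted_wrt_append)
  then obtain f0 where f0: "strict_mono f0" "surj f0" "map f0 xs = ys'"
    using snoc.IH by blast
  define b where "b = (if xs = [] then min (f0 x) y - 1 else last ys')"
  have bp: "b < f0 x"
  proof (cases "xs = []")
    case False
    then have "last xs < x" using snoc.prems(1) by (auto simp: sorted_wrt_append)
    then have "f0 (last xs) < f0 x" using f0(1) by (simp add: strict_mono_less)
    moreover have "last ys' = f0 (last xs)" using f0(3) False by (metis last_map)
    ultimately show ?thesis using False by (simp add: b_def)
  qed (simp add: b_def)
  have bq: "b < y"
  proof (cases "xs = []")
    case False
    then have "ys' \<noteq> []" using f0(3) by auto
    then have "last ys' < y" using snoc.prems(2) ys by (auto simp: sorted_wrt_append)
    then show ?thesis using False by (simp add: b_def)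
  qed (simp add: b_def)
  obtain h where h: "strict_mono h" "surj h" "\<forall>z\<le>b. h z = z" "h (f0 x) = y"
    using fix_below_map[OF bp bq] by blast
  have le: "f0 z \<le> b" if "z \<in> set xs" for z
  proof -
    have ne: "xs \<noteq> []" using that by auto
    have sx: "sorted_wrt (<) xs" using snoc.prems(1) by (simp add: sorted_wrt_append)
    have xs_eq: "xs = butlast xs @ [last xs]" using ne by simp
    have "sorted_wrt (<) (butlast xs @ [last xs])" using sx xs_eq by metis
    then have lt: "\<forall>a\<in>set (butlast xs). a < last xs" by (simp add: sorted_wrt_append)
    have "z \<in> set (butlast xs) \<or> z = last xs" using that xs_eq
      by (metis Un_iff empty_iff empty_set insert_iff list.set(2) set_append)
    then have "z \<le> last xs" using lt by auto
    then have "f0 z \<le> f0 (last xs)" using f0(1) by (simp add: strict_mono_less_eq)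
    moreover have "last ys' = f0 (last xs)" using f0(3) ne by (metis last_map)
    ultimately show ?thesis using ne by (simp add: b_def)
  qed
  have "map (h \<circ> f0) (xs @ [x]) = ys"
  proof -
    have "map (h \<circ> f0) xs = map f0 xs" using le h(3) by auto
    then show ?thesis using f0(3) h(4) ys by simp
  qed
  moreover have "strict_mono (h \<circ> f0)" using h(1) f0(1) by (simp add: strict_mono_def)
  moreover have "surj (h \<circ> f0)" using h(2) f0(2) by (simp add: surj_def) (metis)
  ultimately show ?case by blast
qed

lemma lt_sat_mono:
  assumes "strict_mono f" "surj f"
  shows "lt_sat \<phi> s = lt_sat \<phi> (f \<circ> s)"
proof (induction \<phi> arbitrary: s)
  case (FLt i j) then show ?case using assms(1) by (simp add: strict_mono_less)
next
  case (FEq i j) then show ?case using assms(1) strict_mono_eq by auto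
next
  case (FExists i \<phi>)
  have eq: "f \<circ> (s(i := a)) = (f \<circ> s)(i := f a)" for a by auto
  show ?case
  proof
    assume "lt_sat (FExists i \<phi>) s"
    then obtain a where "lt_sat \<phi> (s(i := a))" by auto
    then have "lt_sat \<phi> ((f \<circ> s)(i := f a))" using FExists.IH eq by metis
    then show "lt_sat (FExists i \<phi>) (f \<circ> s)" by auto
  next
    assume "lt_sat (FExists i \<phi>) (f \<circ> s)"
    then obtain a' where a': "lt_sat \<phi> ((f \<circ> s)(i := a'))" by auto
    obtain a where "a' = f a" using assms(2) by (metis surjD)
    then have "lt_sat \<phi> (s(i := a))" using FExists.IH eq a' by metis
    then show "lt_sat (FExists i \<phi>) s" by auto
  qed
qed auto



lemma pres_comp: "preserves f \<Gamma> \<Longrightarrow> preserves g \<Gamma> \<Longrightarrow> preserves (f \<circ> g) \<Gamma>"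
  unfolding preserves_def by fastforce

lemma pres_inc:
  assumes TL: "temporal_language \<Gamma>" and f: "strict_mono f" "surj f"
  shows "preserves f \<Gamma>"
  unfolding preserves_def
proof (clarify)
  fix n R t assume nR: "(n, R) \<in> set \<Gamma>" and t: "t \<in> R"
  have len: "length t = n" and fo: "fo_definable_lt n R"
    using TL nR t unfolding temporal_language_def by auto
  obtain \<phi> where \<phi>: "\<forall>s. lt_sat \<phi> s \<longleftrightarrow> map s [0..<n] \<in> R"
    using fo unfolding fo_definable_lt_def by blast
  define s where "s i = t ! i" for i
  have ms: "map s [0..<n] = t" unfolding s_def using len map_nth by metis
  have "lt_sat \<phi> s" using \<phi> ms t by simp
  then have "lt_sat \<phi> (f \<circ> s)" using lt_sat_mono[OF f] by simp
  then have "map (f \<circ> s) [0..<n] \<in> R" using \<phi> by blast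
  then show "map f t \<in> R" using ms by (metis map_map)
qed

lemma cyc_low:
  assumes "cyc_witness e" "real_of_rat x < pi"
  shows "cyc e x = e x" and "pi < real_of_rat (cyc e x)"
proof -
  have "x \<in> below_pi" using assms(2) by (simp add: below_pi_def)
  then have "e x \<in> above_pi" using assms(1) unfolding cyc_witness_def bij_betw_def by auto
  then show "cyc e x = e x" and "pi < real_of_rat (cyc e x)" using assms(2) by (simp_all add: cyc_def above_pi_def)
qed

lemma cyc_high:
  assumes cw: "cyc_witness e" and y: "pi < real_of_rat y"
  shows "real_of_rat (cyc e y) < pi" and "e (cyc e y) = y"
proof -
  have bij: "bij_betw e below_pi above_pi" using cw by (simp add: cyc_witness_def)
  have ya: "y \<in> above_pi" using y by (simp add: above_pi_def)
  have ny: "\<not> real_of_rat y < pi" using y by simp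
  have c: "cyc e y = the_inv_into below_pi e y" using ny by (simp add: cyc_def)
  have "the_inv_into below_pi e y \<in> below_pi"
    using bij ya by (metis bij_betw_def order_refl the_inv_into_into)
  moreover have "e (the_inv_into below_pi e y) = y"
    using bij ya by (meson f_the_inv_into_f_bij_betw)
  ultimately show "real_of_rat (cyc e y) < pi" and "e (cyc e y) = y" using c by (simp_all add: below_pi_def)
qed

lemma cyc_mono_low:
  assumes cw: "cyc_witness e" and "real_of_rat x < pi" "real_of_rat y < pi" "x < y"
  shows "cyc e x < cyc e y"
proof -
  have sm: "strict_mono_on below_pi e" using cw by (simp add: cyc_witness_def)
  have "e x < e y" using sm assms(2-4) by (simp add: below_pi_def strict_mono_on_def)
  then show ?thesis using cyc_low(1)[OF cw assms(2)] cyc_low(1)[OF cw assms(3)] by simp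
qed

lemma cyc_mono_high:
  assumes cw: "cyc_witness e" and x: "pi < real_of_rat x" and y: "pi < real_of_rat y" and xy: "x < y"
  shows "cyc e x < cyc e y"
proof (rule ccontr)
  assume "\<not> cyc e x < cyc e y"
  then have le: "cyc e y \<le> cyc e x" by simp
  have sm: "strict_mono_on below_pi e" using cw by (simp add: cyc_witness_def)
  have hx: "real_of_rat (cyc e x) < pi" "e (cyc e x) = x" using cyc_high[OF cw x] by auto
  have hy: "real_of_rat (cyc e y) < pi" "e (cyc e y) = y" using cyc_high[OF cw y] by auto
  have "e (cyc e y) \<le> e (cyc e x)"
  proof (cases "cyc e y = cyc e x")
    case False
    then have "cyc e y < cyc e x" using le by simp
    then have "e (cyc e y) < e (cyc e x)" using sm hx(1) hy(1) unfolding strict_mono_on_def below_pi_def by blast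
    then show ?thesis by simp
  qed simp
  then show False using hx hy xy by simp
qed

lemma rot_to:
  assumes TL: "temporal_language \<Gamma>" and cw: "cyc_witness e" and pc: "preserves (cyc e) \<Gamma>"
    and s1: "sorted_wrt (<) (as @ bs)" and s2: "sorted_wrt (<) ys"
    and len: "length ys = length as + length bs"
  shows "\<exists>f. preserves f \<Gamma> \<and> map f (bs @ as) = ys"
proof -
  define m where "m = length as"
  define l where "l = length bs"
  define ls :: "rat list" where "ls = map (\<lambda>i. of_nat i - of_nat m) [0..<m]"
  define hs :: "rat list" where "hs = map (\<lambda>i. 4 + of_nat i) [0..<l]"
  have lsneg: "x < 0" if "x \<in> set ls" for x using that by (auto simp: ls_def)
  have hs4: "4 \<le> x" if "x \<in> set hs" for x using that by (auto simp: hs_def)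
  have sls: "sorted_wrt (<) ls" by (simp add: ls_def sorted_wrt_map)
  have shs: "sorted_wrt (<) hs" by (simp add: hs_def sorted_wrt_map)
  have "sorted_wrt (<) (ls @ hs)"
    using sls shs lsneg hs4 by (force simp: sorted_wrt_append)
  moreover have "length (as @ bs) = length (ls @ hs)" by (simp add: ls_def hs_def m_def l_def)
  ultimately obtain f1 where f1: "strict_mono f1" "surj f1" "map f1 (as @ bs) = ls @ hs"
    using ext_sorted[OF s1] by blast
  have m1: "map f1 as = ls" "map f1 bs = hs"
    using f1(3) by (simp_all add: ls_def hs_def m_def l_def)
  have pi4: "pi < 4" by (rule pi_less_4)
  have hpi: "pi < real_of_rat x" if "x \<in> set hs" for x
  proof -
    have "(4::real) \<le> real_of_rat x" using hs4[OF that]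
      by (metis of_rat_less_eq of_rat_numeral_eq)
    then show ?thesis using pi4 by linarith
  qed
  have lpi: "real_of_rat x < pi" if "x \<in> set ls" for x
  proof -
    have "real_of_rat x < 0" using lsneg[OF that] by (simp add: of_rat_less_0_iff)
    then show ?thesis using pi_gt_zero by linarith
  qed
  have "sorted_wrt (<) (map (cyc e) hs)"
    unfolding sorted_wrt_map
    by (rule sorted_wrt_mono_rel[OF _ shs]) (auto intro: cyc_mono_high[OF cw] hpi)
  moreover have "sorted_wrt (<) (map (cyc e) ls)"
    unfolding sorted_wrt_map
    by (rule sorted_wrt_mono_rel[OF _ sls]) (auto intro: cyc_mono_low[OF cw] lpi)
  moreover have "cyc e x < cyc e y" if "x \<in> set hs" "y \<in> set ls" for x y
  proof -
    have "real_of_rat (cyc e x) < pi" using cyc_high[OF cw hpi[OF that(1)]] by simp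
    moreover have "pi < real_of_rat (cyc e y)" using cyc_low(2)[OF cw lpi[OF that(2)]] by simp
    ultimately have "real_of_rat (cyc e x) < real_of_rat (cyc e y)" by linarith
    then show ?thesis by (simp add: of_rat_less)
  qed
  ultimately have "sorted_wrt (<) (map (cyc e) (hs @ ls))"
    by (auto simp: sorted_wrt_append)
  moreover have "length (map (cyc e) (hs @ ls)) = length ys"
    using len by (simp add: ls_def hs_def m_def l_def)
  ultimately obtain f2 where f2: "strict_mono f2" "surj f2" "map f2 (map (cyc e) (hs @ ls)) = ys"
    using ext_sorted[OF _ s2] by blast
  define f where "f = f2 \<circ> cyc e \<circ> f1"
  have "preserves f \<Gamma>"
    unfolding f_def by (intro pres_comp pres_inc[OF TL] f1 f2 pc)
  moreover have "map f (bs @ as) = ys"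
  proof -
    have "map f (bs @ as) = map (f2 \<circ> cyc e) (map f1 bs @ map f1 as)" by (simp add: f_def)
    then show ?thesis using f2(3) m1 by simp
  qed
  ultimately show ?thesis by blast
qed



lemma pres_const:
  assumes TL: "temporal_language \<Gamma>" and c: "preserves (\<lambda>_. c) \<Gamma>"
  shows "preserves (\<lambda>_. a) \<Gamma>"
proof -
  obtain f where f: "strict_mono f" "surj f" "map f [c] = [a]"
    using ext_sorted[of "[c]" "[a]"] by auto
  have "preserves (f \<circ> (\<lambda>_. c)) \<Gamma>" by (intro pres_comp pres_inc[OF TL] f c)
  moreover have "f \<circ> (\<lambda>_::rat. c) = (\<lambda>_::rat. a)" using f(3) by auto
  ultimately show ?thesis by metis
qed

lemma two_point:
  assumes TL: "temporal_language \<Gamma>" and um: "preserves uminus \<Gamma>" and pq: "p \<noteq> (q::rat)"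
  shows "\<exists>w. preserves w \<Gamma> \<and> w q = 1 \<and> w p = -1"
proof (cases "p < q")
  case True
  have "\<exists>f. strict_mono f \<and> surj f \<and> map f [p, q] = [-1, 1::rat]"
    by (rule ext_sorted) (use True in auto)
  then obtain f :: "rat \<Rightarrow> rat" where f: "strict_mono f" "surj f" "map f [p, q] = [-1, 1::rat]" by auto
  then show ?thesis using pres_inc[OF TL f(1,2)] by auto
next
  case False
  then have "-p < -q" using pq by simp
  then have "\<exists>f. strict_mono f \<and> surj f \<and> map f [-p, -q] = [-1, 1::rat]"
    by (intro ext_sorted) auto
  then obtain f :: "rat \<Rightarrow> rat" where f: "strict_mono f" "surj f" "map f [-p, -q] = [-1, 1::rat]" by auto
  have "preserves (f \<circ> uminus) \<Gamma>" by (intro pres_comp pres_inc[OF TL] f um)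
  then show ?thesis using f(3) by (intro exI[of _ "f \<circ> uminus"]) auto
qed

definition cs3 :: "rat \<Rightarrow> rat \<Rightarrow> rat \<Rightarrow> bool" where
  "cs3 a b c \<longleftrightarrow> (a < b \<and> b < c) \<or> (b < c \<and> c < a) \<or> (c < a \<and> a < b)"

lemma tri_to:
  assumes TL: "temporal_language \<Gamma>" and cw: "cyc_witness e" and pc: "preserves (cyc e) \<Gamma>"
    and cs: "cs3 x1 x2 x3"
  shows "\<exists>f. preserves f \<Gamma> \<and> f x1 = 0 \<and> f x2 = 1 \<and> f x3 = 4"
proof -
  have ys: "sorted_wrt (<) [0::rat, 1, 4]" by simp
  note R = rot_to[OF TL cw pc _ ys]
  consider "x1 < x2 \<and> x2 < x3" | "x2 < x3 \<and> x3 < x1" | "x3 < x1 \<and> x1 < x2"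
    using cs unfolding cs3_def by blast
  then show ?thesis
  proof cases
    case 1
    then show ?thesis using R[of "[x1,x2,x3]" "[]"] by auto
  next
    case 2
    then show ?thesis using R[of "[x2,x3]" "[x1]"] by auto
  next
    case 3
    then show ?thesis using R[of "[x3]" "[x1,x2]"] by auto
  qed
qed

lemma tri_from:
  assumes TL: "temporal_language \<Gamma>" and cw: "cyc_witness e" and pc: "preserves (cyc e) \<Gamma>"
    and cs: "cs3 y1 y2 y3"
  shows "\<exists>f. preserves f \<Gamma> \<and> f 0 = y1 \<and> f 1 = y2 \<and> f 4 = y3"
proof -
  consider "y1 < y2 \<and> y2 < y3" | "y2 < y3 \<and> y3 < y1" | "y3 < y1 \<and> y1 < y2"
    using cs unfolding cs3_def by blast
  then show ?thesis
  proof cases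
    case 1
    then show ?thesis using rot_to[OF TL cw pc, of "[0,1,4]" "[]" "[y1,y2,y3]"] by auto
  next
    case 2
    then show ?thesis using rot_to[OF TL cw pc, of "[0]" "[1,4]" "[y2,y3,y1]"] by auto
  next
    case 3
    then show ?thesis using rot_to[OF TL cw pc, of "[0,1]" "[4]" "[y3,y1,y2]"] by auto
  qed
qed

lemma cs3_or_neg:
  assumes "a \<noteq> b" "a \<noteq> c" "b \<noteq> c"
  shows "cs3 a b c \<or> cs3 (-a) (-b) (-c)"
  using assms unfolding cs3_def by (auto simp: neq_iff)

lemma tri_trans:
  assumes TL: "temporal_language \<Gamma>" and cw: "cyc_witness e" and pc: "preserves (cyc e) \<Gamma>"
    and um: "preserves uminus \<Gamma>"
    and x: "x1 \<noteq> x2" "x1 \<noteq> x3" "x2 \<noteq> x3" and y: "y1 \<noteq> y2" "y1 \<noteq> y3" "y2 \<noteq> y3"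
  shows "\<exists>f. preserves f \<Gamma> \<and> f x1 = y1 \<and> f x2 = y2 \<and> f x3 = y3"
proof -
  have "\<exists>g. preserves g \<Gamma> \<and> g x1 = 0 \<and> g x2 = 1 \<and> g x3 = 4"
  proof (cases "cs3 x1 x2 x3")
    case True then show ?thesis using tri_to[OF TL cw pc] by blast
  next
    case False
    then have "cs3 (-x1) (-x2) (-x3)" using cs3_or_neg[OF x] by blast
    then obtain g where g: "preserves g \<Gamma>" "g (-x1) = 0" "g (-x2) = 1" "g (-x3) = 4"
      using tri_to[OF TL cw pc] by blast
    have "preserves (g \<circ> uminus) \<Gamma>" using pres_comp[OF g(1) um] .
    then show ?thesis using g by (intro exI[of _ "g \<circ> uminus"]) auto
  qed
  then obtain g where g: "preserves g \<Gamma>" "g x1 = 0" "g x2 = 1" "g x3 = 4" by blast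
  have "\<exists>h. preserves h \<Gamma> \<and> h 0 = y1 \<and> h 1 = y2 \<and> h 4 = y3"
  proof (cases "cs3 y1 y2 y3")
    case True then show ?thesis using tri_from[OF TL cw pc] by blast
  next
    case False
    then have "cs3 (-y1) (-y2) (-y3)" using cs3_or_neg[OF y] by blast
    then obtain h where h: "preserves h \<Gamma>" "h 0 = -y1" "h 1 = -y2" "h 4 = -y3"
      using tri_from[OF TL cw pc] by blast
    have "preserves (uminus \<circ> h) \<Gamma>" using pres_comp[OF um h(1)] .
    then show ?thesis using h by (intro exI[of _ "uminus \<circ> h"]) auto
  qed
  then obtain h where h: "preserves h \<Gamma>" "h 0 = y1" "h 1 = y2" "h 4 = y3" by blast
  show ?thesis using pres_comp[OF h(1) g(1)] g h by (intro exI[of _ "h \<circ> g"]) auto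
qed



definition pendo :: "tstructure \<Rightarrow> rat set \<Rightarrow> (rat \<Rightarrow> rat) \<Rightarrow> bool" where
  "pendo \<Gamma> X h \<longleftrightarrow> (\<forall>(n, R) \<in> set \<Gamma>. \<forall>u \<in> R. set u \<subseteq> X \<longrightarrow> map h u \<in> R)"

lemma pres_pendo: "preserves f \<Gamma> \<Longrightarrow> pendo \<Gamma> X f"
  unfolding preserves_def pendo_def by blast

lemma pendo_comp: "pendo \<Gamma> X h \<Longrightarrow> pendo \<Gamma> (h ` X) g \<Longrightarrow> pendo \<Gamma> X (g \<circ> h)"
  unfolding pendo_def by (fastforce simp: image_mono)

lemma pendo_id: "pendo \<Gamma> X id"
  unfolding pendo_def by auto

lemma pendo_nth: "pendo \<Gamma> X h \<longleftrightarrow>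
   (\<forall>k u. k < length \<Gamma> \<longrightarrow> u \<in> snd (\<Gamma> ! k) \<longrightarrow> set u \<subseteq> X \<longrightarrow> map h u \<in> snd (\<Gamma> ! k))"
proof
  assume H: "pendo \<Gamma> X h"
  show "\<forall>k u. k < length \<Gamma> \<longrightarrow> u \<in> snd (\<Gamma> ! k) \<longrightarrow> set u \<subseteq> X \<longrightarrow> map h u \<in> snd (\<Gamma> ! k)"
  proof (intro allI impI)
    fix k u assume k: "k < length \<Gamma>" and u: "u \<in> snd (\<Gamma> ! k)" and su: "set u \<subseteq> X"
    have "(fst (\<Gamma> ! k), snd (\<Gamma> ! k)) \<in> set \<Gamma>" using k by simp
    then show "map h u \<in> snd (\<Gamma> ! k)" using H u su unfolding pendo_def by blast
  qed
next
  assume H: "\<forall>k u. k < length \<Gamma> \<longrightarrow> u \<in> snd (\<Gamma> ! k) \<longrightarrow> set u \<subseteq> X \<longrightarrow> map h u \<in> snd (\<Gamma> ! k)"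
  show "pendo \<Gamma> X h"
    unfolding pendo_def
  proof (clarify)
    fix n R u assume nR: "(n, R) \<in> set \<Gamma>" and u: "u \<in> R" and su: "set u \<subseteq> X"
    obtain k where k: "k < length \<Gamma>" "\<Gamma> ! k = (n, R)" using nR by (metis in_set_conv_nth)
    then show "map h u \<in> R" using H u su by (metis snd_conv)
  qed
qed

fun conj_list :: "pp_fo list \<Rightarrow> pp_fo" where
  "conj_list [] = PTrue"
| "conj_list (a # as) = PConj a (conj_list as)"

lemma pp_sat_conj_list: "pp_sat \<Gamma> (conj_list as) s \<longleftrightarrow> (\<forall>a \<in> set as. pp_sat \<Gamma> a s)"
  by (induction as) auto

fun ex_list :: "nat list \<Rightarrow> pp_fo \<Rightarrow> pp_fo" where
  "ex_list [] \<phi> = \<phi>"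
| "ex_list (i # is) \<phi> = PExists i (ex_list is \<phi>)"

lemma pp_sat_ex_list:
  "pp_sat \<Gamma> (ex_list is \<phi>) s \<longleftrightarrow> (\<exists>s'. (\<forall>j. j \<notin> set is \<longrightarrow> s' j = s j) \<and> pp_sat \<Gamma> \<phi> s')"
proof (induction "is" arbitrary: s)
  case Nil
  show ?case
  proof
    assume "pp_sat \<Gamma> (ex_list [] \<phi>) s" then show "\<exists>s'. (\<forall>j. j \<notin> set [] \<longrightarrow> s' j = s j) \<and> pp_sat \<Gamma> \<phi> s'" by auto
  next
    assume "\<exists>s'. (\<forall>j. j \<notin> set [] \<longrightarrow> s' j = s j) \<and> pp_sat \<Gamma> \<phi> s'"
    then obtain s' where "\<forall>j. s' j = s j" "pp_sat \<Gamma> \<phi> s'" by auto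
    then have "s' = s" by auto
    then show "pp_sat \<Gamma> (ex_list [] \<phi>) s" using \<open>pp_sat \<Gamma> \<phi> s'\<close> by simp
  qed
next
  case (Cons i "is")
  show ?case
  proof
    assume "pp_sat \<Gamma> (ex_list (i # is) \<phi>) s"
    then obtain a where "pp_sat \<Gamma> (ex_list is \<phi>) (s(i := a))" by auto
    then obtain s' where s': "\<forall>j. j \<notin> set is \<longrightarrow> s' j = (s(i := a)) j" "pp_sat \<Gamma> \<phi> s'"
      using Cons.IH by blast
    have "\<forall>j. j \<notin> set (i # is) \<longrightarrow> s' j = s j" using s'(1) by auto
    then show "\<exists>s'. (\<forall>j. j \<notin> set (i # is) \<longrightarrow> s' j = s j) \<and> pp_sat \<Gamma> \<phi> s'" using s'(2) by blast
  next
    assume "\<exists>s'. (\<forall>j. j \<notin> set (i # is) \<longrightarrow> s' j = s j) \<and> pp_sat \<Gamma> \<phi> s'"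
    then obtain s' where s': "\<forall>j. j \<notin> set (i # is) \<longrightarrow> s' j = s j" "pp_sat \<Gamma> \<phi> s'" by blast
    have "\<forall>j. j \<notin> set is \<longrightarrow> s' j = (s(i := s' i)) j" using s'(1) by auto
    then have "pp_sat \<Gamma> (ex_list is \<phi>) (s(i := s' i))" using Cons.IH s'(2) by blast
    then show "pp_sat \<Gamma> (ex_list (i # is) \<phi>) s" by auto
  qed
qed

lemma diagram:
  assumes TL: "temporal_language \<Gamma>" and X: "finite X"
    and abc: "a \<in> X" "b \<in> X" "c \<in> X" "a \<noteq> b" "a \<noteq> c" "b \<noteq> c"
  shows "\<exists>\<phi>. \<forall>s. pp_sat \<Gamma> \<phi> s \<longleftrightarrow> (\<exists>h. pendo \<Gamma> X h \<and> h a = s 0 \<and> h b = s 1 \<and> h c = s 2)"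
proof -
  obtain rs where rs: "set rs = X - {a, b, c}" "distinct rs"
    using finite_distinct_list[of "X - {a, b, c}"] X by blast
  define xs where "xs = a # b # c # rs"
  have dxs: "distinct xs" using rs abc by (auto simp: xs_def)
  have sxs: "set xs = X" using rs abc by (auto simp: xs_def)
  define m where "m = length xs"
  define idx where "idx x = (THE i. i < m \<and> xs ! i = x)" for x
  have idx_nth: "idx (xs ! i) = i" if "i < m" for i
    unfolding idx_def
  proof (rule the_equality)
    show "i < m \<and> xs ! i = xs ! i" using that by simp
  next
    fix j assume "j < m \<and> xs ! j = xs ! i"
    then show "j = i" using nth_eq_iff_index_eq[OF dxs, of j i] that by (simp add: m_def)
  qed
  have idx_prop: "idx x < m \<and> xs ! idx x = x" if "x \<in> X" for x
  proof -
    have "x \<in> set xs" using that sxs by simp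
    then obtain i where i: "i < m" "xs ! i = x" unfolding m_def in_set_conv_nth by blast
    then show ?thesis using idx_nth[OF i(1)] by simp
  qed
  have m3: "3 \<le> m" by (simp add: m_def xs_def)
  have ia: "idx a = 0" using idx_nth[of 0] m3 by (simp add: xs_def)
  have ib: "idx b = 1" using idx_nth[of 1] m3 by (simp add: xs_def)
  have ic: "idx c = 2" using idx_nth[of 2] m3 by (simp add: xs_def)
  define At where "At = {(k, u). k < length \<Gamma> \<and> u \<in> snd (\<Gamma> ! k) \<and> set u \<subseteq> X}"
  have lenAt: "length u = fst (\<Gamma> ! k)" if "(k, u) \<in> At" for k u
  proof -
    have k: "k < length \<Gamma>" and u: "u \<in> snd (\<Gamma> ! k)" using that by (auto simp: At_def)
    have "(fst (\<Gamma> ! k), snd (\<Gamma> ! k)) \<in> set \<Gamma>" using k by simp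
    then have "snd (\<Gamma> ! k) \<subseteq> {t. length t = fst (\<Gamma> ! k)}"
      using TL unfolding temporal_language_def by blast
    then show ?thesis using u by auto
  qed
  have "At \<subseteq> (\<Union>k \<in> {..<length \<Gamma>}. {k} \<times> {u. set u \<subseteq> X \<and> length u = fst (\<Gamma> ! k)})"
    using lenAt by (auto simp: At_def)
  moreover have "finite (\<Union>k \<in> {..<length \<Gamma>}. {k} \<times> {u. set u \<subseteq> X \<and> length u = fst (\<Gamma> ! k)})"
    using X by (intro finite_UN_I finite_cartesian_product finite_lists_length_eq) auto
  ultimately have fAt: "finite At" by (rule finite_subset)
  obtain al where al: "set al = At" using finite_list[OF fAt] by blast
  define \<phi> where "\<phi> = ex_list [3..<m] (conj_list (map (\<lambda>(k, u). PAtom k (map idx u)) al))"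
  have sem: "pp_sat \<Gamma> \<phi> s \<longleftrightarrow> (\<exists>s'. (\<forall>j. j \<notin> set [3..<m] \<longrightarrow> s' j = s j) \<and>
       (\<forall>k u. (k, u) \<in> At \<longrightarrow> map (s' \<circ> idx) u \<in> snd (\<Gamma> ! k)))" for s
  proof -
    have "pp_sat \<Gamma> (conj_list (map (\<lambda>(k, u). PAtom k (map idx u)) al)) s' \<longleftrightarrow>
          (\<forall>k u. (k, u) \<in> At \<longrightarrow> map (s' \<circ> idx) u \<in> snd (\<Gamma> ! k))" for s'
    proof -
      have "pp_sat \<Gamma> (conj_list (map (\<lambda>(k, u). PAtom k (map idx u)) al)) s' \<longleftrightarrow>
            (\<forall>(k, u) \<in> At. pp_sat \<Gamma> (PAtom k (map idx u)) s')"
        by (auto simp: pp_sat_conj_list al[symmetric])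
      also have "\<dots> \<longleftrightarrow> (\<forall>k u. (k, u) \<in> At \<longrightarrow> map (s' \<circ> idx) u \<in> snd (\<Gamma> ! k))"
        using lenAt by (auto simp: At_def)
      finally show ?thesis .
    qed
    then show ?thesis unfolding \<phi>_def pp_sat_ex_list by simp
  qed
  have "pp_sat \<Gamma> \<phi> s \<longleftrightarrow> (\<exists>h. pendo \<Gamma> X h \<and> h a = s 0 \<and> h b = s 1 \<and> h c = s 2)" for s
  proof
    assume "pp_sat \<Gamma> \<phi> s"
    then obtain s' where s': "\<forall>j. j \<notin> set [3..<m] \<longrightarrow> s' j = s j"
        "\<forall>k u. (k, u) \<in> At \<longrightarrow> map (s' \<circ> idx) u \<in> snd (\<Gamma> ! k)"
      using sem by blast
    have "pendo \<Gamma> X (s' \<circ> idx)"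
      unfolding pendo_nth using s'(2) by (auto simp: At_def)
    moreover have "(s' \<circ> idx) a = s 0" "(s' \<circ> idx) b = s 1" "(s' \<circ> idx) c = s 2"
      using s'(1) ia ib ic by auto
    ultimately show "\<exists>h. pendo \<Gamma> X h \<and> h a = s 0 \<and> h b = s 1 \<and> h c = s 2" by blast
  next
    assume "\<exists>h. pendo \<Gamma> X h \<and> h a = s 0 \<and> h b = s 1 \<and> h c = s 2"
    then obtain h where h: "pendo \<Gamma> X h" "h a = s 0" "h b = s 1" "h c = s 2" by blast
    define s' where "s' j = (if j \<in> set [3..<m] then h (xs ! j) else s j)" for j
    have s'1: "\<forall>j. j \<notin> set [3..<m] \<longrightarrow> s' j = s j" by (simp add: s'_def)
    have s'idx: "s' (idx x) = h x" if "x \<in> X" for x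
    proof -
      have i: "idx x < m" "xs ! idx x = x" using idx_prop[OF that] by auto
      show ?thesis
      proof (cases "3 \<le> idx x")
        case True then show ?thesis using i by (simp add: s'_def)
      next
        case False
        then have "idx x = 0 \<or> idx x = 1 \<or> idx x = 2" by auto
        then show ?thesis using i h by (auto simp: s'_def xs_def)
      qed
    qed
    have "\<forall>k u. (k, u) \<in> At \<longrightarrow> map (s' \<circ> idx) u \<in> snd (\<Gamma> ! k)"
    proof (intro allI impI)
      fix k u assume ku: "(k, u) \<in> At"
      then have "set u \<subseteq> X" "k < length \<Gamma>" "u \<in> snd (\<Gamma> ! k)" by (auto simp: At_def)
      then have "map (s' \<circ> idx) u = map h u" using s'idx by auto
      moreover have "map h u \<in> snd (\<Gamma> ! k)"
        using h(1) \<open>set u \<subseteq> X\<close> \<open>k < length \<Gamma>\<close> \<open>u \<in> snd (\<Gamma> ! k)\<close> unfolding pendo_nth by blast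
      ultimately show "map (s' \<circ> idx) u \<in> snd (\<Gamma> ! k)" by (simp only:)
    qed
    then show "pp_sat \<Gamma> \<phi> s" using sem s'1 by blast
  qed
  then show ?thesis by blast
qed

lemma S_rel_iff: "[x, y, z] \<in> S_rel \<longleftrightarrow> (x = y \<and> y = z) \<or> (x \<noteq> y \<and> x \<noteq> z \<and> z \<noteq> y)"
  unfolding S_rel_def by auto

lemma map_upt3: "map s [0..<3] = [s 0, s 1, s 2]"
  by (simp add: upt_rec numeral_2_eq_2)



context
  fixes \<Gamma> :: tstructure and e :: "rat \<Rightarrow> rat"
  assumes TL: "temporal_language \<Gamma>"
    and cst: "\<exists>c. preserves (\<lambda>_. c) \<Gamma>"
    and um: "preserves uminus \<Gamma>"
    and cw: "cyc_witness e"
    and pc: "preserves (cyc e) \<Gamma>"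
    and npp: "\<not> pp_defines \<Gamma> 3 S_rel"
begin

lemma constP: "preserves (\<lambda>_. a) \<Gamma>"
  using cst pres_const[OF TL] by blast

lemma step:
  assumes X: "finite X" and abc: "a \<in> X" "b \<in> X" "c \<in> X" "a \<noteq> b" "a \<noteq> c" "b \<noteq> c"
  shows "\<exists>h. pendo \<Gamma> X h \<and> h a = h b \<and> h a \<noteq> h c"
proof (rule ccontr)
  assume no: "\<not> (\<exists>h. pendo \<Gamma> X h \<and> h a = h b \<and> h a \<noteq> h c)"
  define P where "P x y z \<longleftrightarrow> (\<exists>h. pendo \<Gamma> X h \<and> h a = x \<and> h b = y \<and> h c = z)" for x y z
  obtain \<phi>1 where \<phi>1: "\<forall>s. pp_sat \<Gamma> \<phi>1 s \<longleftrightarrow> (\<exists>h. pendo \<Gamma> X h \<and> h a = s 0 \<and> h b = s 1 \<and> h c = s 2)"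
    using diagram[OF TL X abc] by blast
  obtain \<phi>2 where \<phi>2: "\<forall>s. pp_sat \<Gamma> \<phi>2 s \<longleftrightarrow> (\<exists>h. pendo \<Gamma> X h \<and> h c = s 0 \<and> h a = s 1 \<and> h b = s 2)"
    using diagram[OF TL X abc(3,1,2)] abc by (metis (no_types, lifting))
  obtain \<phi>3 where \<phi>3: "\<forall>s. pp_sat \<Gamma> \<phi>3 s \<longleftrightarrow> (\<exists>h. pendo \<Gamma> X h \<and> h b = s 0 \<and> h c = s 1 \<and> h a = s 2)"
    using diagram[OF TL X abc(2,3,1)] abc by (metis (no_types, lifting))
  have Pc: "P x x x" for x
    unfolding P_def using pres_pendo[OF constP[of x]] by blast
  have Pd: "P x y z" if d: "x \<noteq> y" "x \<noteq> z" "y \<noteq> z" for x y z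
  proof -
    obtain f where "preserves f \<Gamma>" "f a = x" "f b = y" "f c = z"
      using tri_trans[OF TL cw pc um abc(4-6) d] by blast
    then show ?thesis unfolding P_def using pres_pendo by blast
  qed
  have Pb: "x = z" if pxz: "P x x z" for x z
  proof -
    obtain h where h: "pendo \<Gamma> X h" "h a = x" "h b = x" "h c = z" using pxz unfolding P_def by blast
    show ?thesis
    proof (rule ccontr)
      assume "x \<noteq> z"
      then have "pendo \<Gamma> X h \<and> h a = h b \<and> h a \<noteq> h c" using h by simp
      then show False using no by blast
    qed
  qed
  define \<phi> where "\<phi> = PConj \<phi>1 (PConj \<phi>2 \<phi>3)"
  have "pp_sat \<Gamma> \<phi> s \<longleftrightarrow> map s [0..<3] \<in> S_rel" for s
  proof -
    have "pp_sat \<Gamma> \<phi> s \<longleftrightarrow> P (s 0) (s 1) (s 2) \<and> P (s 1) (s 2) (s 0) \<and> P (s 2) (s 0) (s 1)"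
      unfolding \<phi>_def P_def using \<phi>1 \<phi>2 \<phi>3 by auto
    also have "\<dots> \<longleftrightarrow> [s 0, s 1, s 2] \<in> S_rel"
      unfolding S_rel_iff using Pc Pd Pb by metis
    finally show ?thesis by (simp add: map_upt3)
  qed
  then have "pp_defines \<Gamma> 3 S_rel" unfolding pp_defines_def by blast
  then show False using npp by blast
qed

lemma core: "finite X \<Longrightarrow> 2 \<le> card X \<Longrightarrow> \<exists>g. pendo \<Gamma> X g \<and> card (g ` X) = 2"
proof (induction "card X" arbitrary: X rule: less_induct)
  case less
  show ?case
  proof (cases "card X = 2")
    case True
    then show ?thesis using pendo_id[of \<Gamma> X] by (intro exI[of _ id]) auto
  next
    case False
    then have "3 \<le> card X" using less.prems by simp
    then obtain S where S: "S \<subseteq> X" "card S = 3" by (rule obtain_subset_with_card_n)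
    then obtain a b c where "S = {a, b, c}" "a \<noteq> b" "a \<noteq> c" "b \<noteq> c"
      unfolding card_3_iff by blast
    then have abc: "a \<in> X" "b \<in> X" "c \<in> X" "a \<noteq> b" "a \<noteq> c" "b \<noteq> c"
      using S(1) by auto
    obtain h where h: "pendo \<Gamma> X h" "h a = h b" "h a \<noteq> h c"
      using step[OF less.prems(1) abc] by blast
    have ninj: "\<not> inj_on h X" using h(2) abc by (meson inj_onD)
    have lt: "card (h ` X) < card X"
      using ninj less.prems(1) card_image_le inj_on_iff_eq_card le_neq_implies_less by blast
    have "{h a, h c} \<subseteq> h ` X" using abc by auto
    then have ge2: "2 \<le> card (h ` X)" using h(3) less.prems(1)
      by (metis card_2_iff card_mono finite_imageI)
    obtain g' where g': "pendo \<Gamma> (h ` X) g'" "card (g' ` h ` X) = 2"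
      using less.hyps[OF lt _ ge2] less.prems(1) by blast
    have "pendo \<Gamma> X (g' \<circ> h)" using pendo_comp[OF h(1) g'(1)] .
    moreover have "card ((g' \<circ> h) ` X) = 2" using g'(2) by (simp add: image_comp)
    ultimately show ?thesis by blast
  qed
qed

lemma gen:
  assumes T: "finite T" "v \<in> T" and B: "finite B" "\<gamma> \<in> B" and cd: "card T = card B"
  shows "\<exists>f. preserves f \<Gamma> \<and> inj_on f T \<and> f ` T = B \<and> f v = \<gamma>"
proof -
  obtain zs :: "rat list" where zs: "sorted_wrt (<) zs" "set zs = T" "length zs = card T"
    using sorted_list_of_set.finite_set_strict_sorted[of T] T by auto
  define N where "N = card T"
  obtain p where p: "p < N" "zs ! p = v" using zs T by (metis N_def in_set_conv_nth)
  define ys1 :: "rat list" where "ys1 = map of_nat [0..<N]"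
  have sys1: "sorted_wrt (<) ys1" by (simp add: ys1_def sorted_wrt_map)
  have "sorted_wrt (<) (take p zs @ drop p zs)" using zs by simp
  moreover have "length ys1 = length (take p zs) + length (drop p zs)"
    using zs p by (simp add: ys1_def N_def)
  ultimately obtain f1 where f1: "preserves f1 \<Gamma>" "map f1 (drop p zs @ take p zs) = ys1"
    using rot_to[OF TL cw pc _ sys1] by blast
  define L where "L = drop p zs @ take p zs"
  have L0: "L ! 0 = v" using p zs by (simp add: nth_append N_def L_def)
  have lenL: "0 < length L" using p zs by (simp add: N_def L_def)
  have N0: "0 < N" using p by simp
  have "f1 v = map f1 L ! 0" using nth_map[OF lenL, of f1] L0 by simp
  also have "\<dots> = ys1 ! 0" using f1(2) by (simp add: L_def)
  also have "\<dots> = 0" using N0 by (simp add: ys1_def)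
  finally have f1v: "f1 v = 0" .
  have sL: "set L = T"
  proof -
    have "set zs = set (take p zs) \<union> set (drop p zs)"
      using set_append[of "take p zs" "drop p zs"] by simp
    then show ?thesis using zs(2) by (auto simp: L_def)
  qed
  have f1T: "f1 ` T = set ys1"
  proof -
    have "set (map f1 L) = set ys1" using f1(2) by (simp add: L_def)
    then show ?thesis using sL by simp
  qed
  obtain ws :: "rat list" where ws: "sorted_wrt (<) ws" "set ws = B" "length ws = card B"
    using sorted_list_of_set.finite_set_strict_sorted[of B] B by auto
  obtain q where q: "q < N" "ws ! q = \<gamma>" using ws B cd by (metis N_def in_set_conv_nth)
  have "sorted_wrt (<) (take (N - q) ys1 @ drop (N - q) ys1)" using sys1 by simp
  moreover have "length ws = length (take (N - q) ys1) + length (drop (N - q) ys1)"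
    using ws cd by (simp add: ys1_def N_def)
  ultimately obtain f2 where f2: "preserves f2 \<Gamma>" "map f2 (drop (N - q) ys1 @ take (N - q) ys1) = ws"
    using rot_to[OF TL cw pc _ ws(1)] by blast
  have lq: "length (drop (N - q) ys1) = q" using q by (simp add: ys1_def)
  define L2 where "L2 = drop (N - q) ys1 @ take (N - q) ys1"
  have L2q: "L2 ! q = 0"
    using lq q by (simp add: nth_append ys1_def L2_def)
  have lenL2: "q < length L2" using q by (simp add: ys1_def L2_def)
  have "f2 0 = map f2 L2 ! q" using nth_map[OF lenL2, of f2] L2q by simp
  also have "\<dots> = \<gamma>" using f2(2) q by (simp add: L2_def)
  finally have f20: "f2 0 = \<gamma>" .
  have sL2: "set L2 = set ys1"
  proof -
    have "set ys1 = set (take (N - q) ys1) \<union> set (drop (N - q) ys1)"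
      using set_append[of "take (N - q) ys1" "drop (N - q) ys1"] by simp
    then show ?thesis by (auto simp: L2_def)
  qed
  have f2T: "f2 ` set ys1 = B"
  proof -
    have "set (map f2 L2) = B" using f2(2) ws(2) by (simp add: L2_def)
    then show ?thesis using sL2 by simp
  qed
  define f where "f = f2 \<circ> f1"
  have "preserves f \<Gamma>" unfolding f_def using pres_comp[OF f2(1) f1(1)] .
  moreover have fT: "f ` T = B"
  proof -
    have "f ` T = f2 ` (f1 ` T)" by (simp add: f_def image_comp)
    then show ?thesis using f1T f2T by simp
  qed
  moreover have "inj_on f T" using fT cd T(1) by (simp add: inj_on_iff_eq_card)
  moreover have "f v = \<gamma>" using f1v f20 by (simp add: f_def)
  ultimately show ?thesis by blast
qed

lemma peak_pres: "preserves peak \<Gamma>"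
  unfolding preserves_def
proof (clarify)
  fix n R t assume nR: "(n, R) \<in> set \<Gamma>" and t: "t \<in> R"
  have pc1: "map (\<lambda>_. a) t \<in> R" for a using constP[of a] nR t unfolding preserves_def by blast
  show "map peak t \<in> R"
  proof (cases "0 \<in> set t")
    case False
    then have "map peak t = map (\<lambda>_. -1) t" by (auto simp: peak_def)
    then show ?thesis using pc1[of "-1"] by (simp only:)
  next
    case z: True
    show ?thesis
    proof (cases "set t = {0}")
      case True
      then have "map peak t = map (\<lambda>_. 1) t" by (auto simp: peak_def)
      then show ?thesis using pc1[of 1] by (simp only:)
    next
      case False
      define T where "T = set t"
      have fT: "finite T" by (simp add: T_def)
      obtain x where x: "x \<in> T" "x \<noteq> 0" using False z T_def by blast
      have "{0, x} \<subseteq> T" using z x T_def by auto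
      then have c2: "2 \<le> card T" using x fT by (metis card_2_iff card_mono)
      define k where "k = card T - 1"
      have k1: "1 \<le> k" and ck: "card T = k + 1" using c2 by (auto simp: k_def)
      define X :: "rat set" where "X = of_nat ` {..<2 * k}"
      have cX: "card X = 2 * k" unfolding X_def by (simp add: card_image inj_on_def)
      have fX: "finite X" by (simp add: X_def)
      obtain g where g: "pendo \<Gamma> X g" "card (g ` X) = 2"
        using core[OF fX] cX k1 by auto
      obtain p1 p2 where p12: "g ` X = {p1, p2}" "p1 \<noteq> p2" using g(2) by (metis card_2_iff)
      define A1 where "A1 = {y \<in> X. g y = p1}"
      define A2 where "A2 = {y \<in> X. g y = p2}"
      have "A1 \<union> A2 = X" using p12 by (auto simp: A1_def A2_def)
      moreover have "A1 \<inter> A2 = {}" using p12 by (auto simp: A1_def A2_def)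
      moreover have "finite A1" "finite A2" using fX by (auto simp: A1_def A2_def)
      ultimately have "card A1 + card A2 = 2 * k" using cX by (metis card_Un_disjoint)
      then have "k \<le> card A1 \<or> k \<le> card A2" by linarith
      then obtain p q \<gamma> where pq: "p \<noteq> q" "k \<le> card {y \<in> X. g y = p}" "\<gamma> \<in> X" "g \<gamma> = q"
      proof
        assume "k \<le> card A1"
        moreover obtain \<gamma> where "\<gamma> \<in> X" "g \<gamma> = p2" using p12 by (metis imageE insertCI)
        ultimately show thesis using that[of p1 p2 \<gamma>] p12 by (simp add: A1_def)
      next
        assume "k \<le> card A2"
        moreover obtain \<gamma> where "\<gamma> \<in> X" "g \<gamma> = p1" using p12 by (metis imageE insertCI)
        ultimately show thesis using that[of p2 p1 \<gamma>] p12 by (simp add: A2_def)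
      qed
      obtain K where K: "K \<subseteq> {y \<in> X. g y = p}" "card K = k" "finite K"
        using obtain_subset_with_card_n[OF pq(2)] by blast
      have gK: "\<gamma> \<notin> K" using K(1) pq by auto
      define B where "B = insert \<gamma> K"
      have cB: "card B = card T" using K gK ck by (simp add: B_def)
      have BX: "B \<subseteq> X" using K(1) pq(3) by (auto simp: B_def)
      obtain f where f: "preserves f \<Gamma>" "inj_on f T" "f ` T = B" "f 0 = \<gamma>"
      proof -
        have z': "0 \<in> T" using z by (simp add: T_def)
        have fB: "finite B" using K(3) by (simp add: B_def)
        have gB: "\<gamma> \<in> B" by (simp add: B_def)
        show thesis using gen[OF fT z' fB gB cB[symmetric]] that by blast
      qed
      have u: "map f t \<in> R" using f(1) nR t unfolding preserves_def by blast
      have "set (map f t) \<subseteq> X" using f(3) BX by (simp add: T_def)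
      then have gu: "map g (map f t) \<in> R" using g(1) nR u unfolding pendo_def by blast
      obtain w where w: "preserves w \<Gamma>" "w q = 1" "w p = -1" using two_point[OF TL um pq(1)] by blast
      have wgu: "map w (map g (map f t)) \<in> R" using w(1) nR gu unfolding preserves_def by blast
      have eqm: "map (\<lambda>y. w (g (f y))) t = map peak t"
      proof (rule map_cong[OF refl])
        fix y assume y: "y \<in> set t"
        show "w (g (f y)) = peak y"
        proof (cases "y = 0")
          case True then show ?thesis using f(4) pq w by (simp add: peak_def)
        next
          case False
          have "f y \<in> B" using f(3) y by (auto simp: T_def)
          moreover have "f y \<noteq> \<gamma>" using f(2,4) False y z by (metis T_def inj_onD)
          ultimately have "f y \<in> K" by (simp add: B_def)
          then have "g (f y) = p" using K(1) by auto
          then show ?thesis using False w by (simp add: peak_def)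
        qed
      qed
      then have "map w (map g (map f t)) = map peak t" by simp
      then show ?thesis using wgu by (simp only:)
    qed
  qed
qed

end

theorem lemma4p10:
  fixes \<Gamma> :: tstructure and e :: "rat \<Rightarrow> rat"
  assumes "temporal_language \<Gamma>"
    and "\<exists>c. preserves (\<lambda>_. c) \<Gamma>"
    and "preserves uminus \<Gamma>"
    and "cyc_witness e"
    and "preserves (cyc e) \<Gamma>"
    and "\<not> pp_defines \<Gamma> 3 S_rel"
  shows "preserves su1 \<Gamma> \<or> preserves peak \<Gamma> \<or> preserves ci \<Gamma> \<or> preserves ic \<Gamma>
         \<or> (\<forall>f. bij f \<longrightarrow> preserves f \<Gamma>)"
  using peak_pres[OF assms] by blast


end
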